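(* Let $H_{ij}$, $i=1,\ldots,b$, $j=1,\ldots,s_i$, be $n=\sum_{i=1}^b s_i$ null hypotheses arranged in $b$ blocks, with corresponding $p$-values $P_{ij}$, where each $p$-value of a true null hypothesis is distributed as $U(0,1)$. Assume the rows $(P_{i1},\ldots,P_{is_i})$, $i=1,\ldots,b$, are mutually independent, with arbitrary dependence allowed within each row. Fix $\alpha\in(0,1)$ and apply the following two-stage BH method: (1) set $\tilde P_i=\bar s\min_{1\le j\le s_i}P_{ij}$ with $\bar s=n/b$; (2) order the block $p$-values as $\tilde P_{(1)}\le\cdots\le\tilde P_{(b)}$ and let $B=\max\{1\le i\le b:\tilde P_{(i)}\le i\alpha/b\}$; (3) if this maximum exists, reject $H_{ij}$ for all $(i,j)$ with $\tilde P_i\le\tilde P_{(B)}$ and $P_{ij}\le B\alpha/n$, and otherwise reject nothing. Then for every configuration of true and false null hypotheses the false discovery rate of this method is at most $\alpha$.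
   Context: Write $H_{ij}=0$ if the hypothesis is true and $H_{ij}=1$ if it is false. If $V$ is the number of true null hypotheses rejected and $R$ the total number of rejections, the false discovery rate is $\mathrm{FDR}=E\left(V/\max\{R,1\}\right)$. *)

theory Defs
  imports "HOL-Probability.Probability"
begin

text \<open>Blocks are indexed 0..b-1, hypotheses within block i by 0..s i - 1.
  p i j is the p-value of hypothesis (i,j).\<close>

definition total_n :: "nat \<Rightarrow> (nat \<Rightarrow> nat) \<Rightarrow> nat" where
  "total_n b s = (\<Sum>i<b. s i)"

definition block_p :: "nat \<Rightarrow> (nat \<Rightarrow> nat) \<Rightarrow> (nat \<Rightarrow> nat \<Rightarrow> real) \<Rightarrow> nat \<Rightarrow> real" where
  "block_p b s p i = (real (total_n b s) / real b) * Min {p i j | j. j < s i}"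

definition sorted_block_p :: "nat \<Rightarrow> (nat \<Rightarrow> nat) \<Rightarrow> (nat \<Rightarrow> nat \<Rightarrow> real) \<Rightarrow> real list" where
  "sorted_block_p b s p = sort (map (block_p b s p) [0..<b])"

text \<open>k-th smallest block p-value, k = 1..b.\<close>
definition block_order_stat :: "nat \<Rightarrow> (nat \<Rightarrow> nat) \<Rightarrow> (nat \<Rightarrow> nat \<Rightarrow> real) \<Rightarrow> nat \<Rightarrow> real" where
  "block_order_stat b s p k = sorted_block_p b s p ! (k - 1)"

definition B_set :: "nat \<Rightarrow> (nat \<Rightarrow> nat) \<Rightarrow> real \<Rightarrow> (nat \<Rightarrow> nat \<Rightarrow> real) \<Rightarrow> nat set" where
  "B_set b s \<alpha> p = {k \<in> {1..b}. block_order_stat b s p k \<le> real k * \<alpha> / real b}"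

definition two_stage_rejections ::
  "nat \<Rightarrow> (nat \<Rightarrow> nat) \<Rightarrow> real \<Rightarrow> (nat \<Rightarrow> nat \<Rightarrow> real) \<Rightarrow> (nat \<times> nat) set" where
  "two_stage_rejections b s \<alpha> p =
     (if B_set b s \<alpha> p = {} then {}
      else (let B = Max (B_set b s \<alpha> p) in
        {(i, j). i < b \<and> j < s i \<and>
                 block_p b s p i \<le> block_order_stat b s p B \<and>
                 p i j \<le> real B * \<alpha> / real (total_n b s)}))"

text \<open>true_null i j holds iff H_ij = 0 (the null hypothesis is true).\<close>
definition num_false_rej ::
  "nat \<Rightarrow> (nat \<Rightarrow> nat) \<Rightarrow> real \<Rightarrow> (nat \<Rightarrow> nat \<Rightarrow> bool) \<Rightarrow> (nat \<Rightarrow> nat \<Rightarrow> real) \<Rightarrow> nat" where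
  "num_false_rej b s \<alpha> true_null p =
     card {(i, j) \<in> two_stage_rejections b s \<alpha> p. true_null i j}"

definition num_rej :: "nat \<Rightarrow> (nat \<Rightarrow> nat) \<Rightarrow> real \<Rightarrow> (nat \<Rightarrow> nat \<Rightarrow> real) \<Rightarrow> nat" where
  "num_rej b s \<alpha> p = card (two_stage_rejections b s \<alpha> p)"

definition FDR ::
  "'a measure \<Rightarrow> nat \<Rightarrow> (nat \<Rightarrow> nat) \<Rightarrow> real \<Rightarrow> (nat \<Rightarrow> nat \<Rightarrow> bool) \<Rightarrow> (nat \<Rightarrow> nat \<Rightarrow> 'a \<Rightarrow> real) \<Rightarrow> real" where
  "FDR M b s \<alpha> true_null P =
     (\<integral>\<omega>. real (num_false_rej b s \<alpha> true_null (\<lambda>i j. P i j \<omega>)) /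
          real (max (num_rej b s \<alpha> (\<lambda>i j. P i j \<omega>)) 1) \<partial>M)"

end

theory Submission imports Defs begin


lemma sorted_le_count:
  fixes ys :: "real list"
  assumes "sorted ys" "1 \<le> k" "k \<le> length ys"
  shows "(ys ! (k-1) \<le> x) \<longleftrightarrow> k \<le> length (filter (\<lambda>y. y \<le> x) ys)"
proof -
  have L: "length (filter (\<lambda>y. y \<le> x) ys) = card {m. m < length ys \<and> ys ! m \<le> x}"
    by (simp add: length_filter_conv_card)
  show ?thesis
  proof
    assume h: "ys ! (k-1) \<le> x"
    have "{..<k} \<subseteq> {m. m < length ys \<and> ys ! m \<le> x}"
    proof
      fix m assume "m \<in> {..<k}"
      then have "m \<le> k - 1" by auto
      moreover have "k - 1 < length ys" using assms by simp
      ultimately have "ys ! m \<le> ys ! (k-1)" using sorted_nth_mono[OF assms(1)] by blast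
      then show "m \<in> {m. m < length ys \<and> ys ! m \<le> x}" using h \<open>m \<le> k-1\<close> assms by auto
    qed
    then have "card {..<k} \<le> card {m. m < length ys \<and> ys ! m \<le> x}"
      by (intro card_mono) auto
    then show "k \<le> length (filter (\<lambda>y. y \<le> x) ys)" using L by simp
  next
    assume h: "k \<le> length (filter (\<lambda>y. y \<le> x) ys)"
    show "ys ! (k-1) \<le> x"
    proof (rule ccontr)
      assume "\<not> ys ! (k-1) \<le> x"
      have "{m. m < length ys \<and> ys ! m \<le> x} \<subseteq> {..<k-1}"
      proof
        fix m assume m: "m \<in> {m. m < length ys \<and> ys ! m \<le> x}"
        show "m \<in> {..<k-1}"
        proof (rule ccontr)
          assume "m \<notin> {..<k-1}"
          then have "k - 1 \<le> m" by simp
          then have "ys ! (k-1) \<le> ys ! m" using m sorted_nth_mono[OF assms(1)] by blast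
          then show False using m \<open>\<not> ys ! (k-1) \<le> x\<close> by auto
        qed
      qed
      then have "card {m. m < length ys \<and> ys ! m \<le> x} \<le> card {..<k-1}"
        by (intro card_mono) auto
      then have "card {m. m < length ys \<and> ys ! m \<le> x} \<le> k - 1" by simp
      then show False using h L assms by simp
    qed
  qed
qed

lemma os_char:
  fixes t :: "nat \<Rightarrow> real"
  assumes "1 \<le> k" "k \<le> b"
  shows "(sort (map t [0..<b]) ! (k-1) \<le> x) \<longleftrightarrow> k \<le> card {l\<in>{..<b}. t l \<le> x}"
proof -
  have "length (filter (\<lambda>y. y \<le> x) (sort (map t [0..<b]))) = length (filter (\<lambda>y. y \<le> x) (map t [0..<b]))"
    by (simp add: filter_sort)
  also have "\<dots> = length (filter (\<lambda>l. t l \<le> x) [0..<b])" by (simp add: filter_map comp_def)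
  also have "\<dots> = card {l\<in>{..<b}. t l \<le> x}"
    by (subst distinct_length_filter) (auto intro!: arg_cong[where f=card])
  finally have e: "length (filter (\<lambda>y. y \<le> x) (sort (map t [0..<b]))) = card {l\<in>{..<b}. t l \<le> x}" .
  have s1: "sorted (sort (map t [0..<b]))" by simp
  have s2: "k \<le> length (sort (map t [0..<b]))" using assms by simp
  show ?thesis using sorted_le_count[OF s1 assms(1) s2, of x] unfolding e .
qed

definition Bset' :: "nat \<Rightarrow> real \<Rightarrow> (nat \<Rightarrow> real) \<Rightarrow> nat set" where
  "Bset' b \<alpha> t = {k\<in>{1..b}. k \<le> card {l\<in>{..<b}. t l \<le> real k * \<alpha> / real b}}"

lemma B_set_eq: "B_set b s \<alpha> p = Bset' b \<alpha> (block_p b s p)"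
  unfolding B_set_def Bset'_def block_order_stat_def sorted_block_p_def
  using os_char by auto

lemma Bset'_fin: "finite (Bset' b \<alpha> t)" "Bset' b \<alpha> t \<subseteq> {1..b}"
  unfolding Bset'_def by auto

lemma BH_replace:
  assumes ne: "Bset' b \<alpha> t \<noteq> {}" and i: "i < b"
    and ti: "t i \<le> real (Max (Bset' b \<alpha> t)) * \<alpha> / real b" and a: "0 < \<alpha>"
  shows "Max (Bset' b \<alpha> (t(i:=0))) = Max (Bset' b \<alpha> t)"
proof -
  define B where "B = Max (Bset' b \<alpha> t)"
  have Bin: "B \<in> Bset' b \<alpha> t" unfolding B_def using ne Bset'_fin by auto
  then have B1: "1 \<le> B" "B \<le> b" unfolding Bset'_def by auto
  have eq: "k \<in> Bset' b \<alpha> (t(i:=0)) \<longleftrightarrow> k \<in> Bset' b \<alpha> t" if "B \<le> k" for k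
  proof -
    have "real B * \<alpha> / real b \<le> real k * \<alpha> / real b"
      using that a by (intro divide_right_mono mult_right_mono) auto
    then have c1: "t i \<le> real k * \<alpha> / real b" using ti unfolding B_def[symmetric] by linarith
    have c2: "0 \<le> real k * \<alpha> / real b" using a by auto
    have "{l\<in>{..<b}. (t(i:=0)) l \<le> real k * \<alpha> / real b} = {l\<in>{..<b}. t l \<le> real k * \<alpha> / real b}"
      using c1 c2 by auto
    then show ?thesis unfolding Bset'_def by simp
  qed
  have "B \<in> Bset' b \<alpha> (t(i:=0))" using eq[of B] Bin by simp
  moreover have "k \<le> B" if "k \<in> Bset' b \<alpha> (t(i:=0))" for k
  proof (rule ccontr)
    assume "\<not> k \<le> B"
    then have "k \<in> Bset' b \<alpha> t" using eq[of k] that by simp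
    then have "k \<le> B" unfolding B_def using Bset'_fin by auto
    then show False using \<open>\<not> k \<le> B\<close> by simp
  qed
  ultimately show ?thesis unfolding B_def[symmetric] using Bset'_fin
    by (intro antisym Max.boundedI) auto
qed

lemma Bset'_one: "1 \<le> b \<Longrightarrow> 0 < \<alpha> \<Longrightarrow> i < b \<Longrightarrow> 1 \<in> Bset' b \<alpha> (t(i:=0))"
proof -
  assume h: "1 \<le> b" "0 < \<alpha>" "i < b"
  have "{i} \<subseteq> {l\<in>{..<b}. (t(i:=0)) l \<le> real 1 * \<alpha> / real b}" using h by auto
  then have "card {i} \<le> card {l\<in>{..<b}. (t(i:=0)) l \<le> real 1 * \<alpha> / real b}"
    by (intro card_mono) auto
  then show ?thesis unfolding Bset'_def using h by auto
qed

lemma n_ge_b: "\<forall>i<b. 1 \<le> s i \<Longrightarrow> b \<le> total_n b s"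
proof -
  assume h: "\<forall>i<b. 1 \<le> s i"
  have "(\<Sum>i<b. (1::nat)) \<le> (\<Sum>i<b. s i)" using h by (intro sum_mono) auto
  then show ?thesis unfolding total_n_def by simp
qed

lemma pointwise:
  fixes p :: "nat \<Rightarrow> nat \<Rightarrow> real" and tn :: "nat \<Rightarrow> nat \<Rightarrow> bool"
  assumes b1: "1 \<le> b" and s1: "\<forall>i<b. 1 \<le> s i" and a: "0 < \<alpha>"
  shows "real (num_false_rej b s \<alpha> tn p) / real (max (num_rej b s \<alpha> p) 1) \<le>
    (\<Sum>(i,j)\<in>{(i,j). i<b \<and> j<s i \<and> tn i j}. \<Sum>k\<in>{1..b}.
       if Max (Bset' b \<alpha> ((block_p b s p)(i:=0))) = k \<and> p i j \<le> real k * \<alpha> / real (total_n b s)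
       then 1 / real k else 0)"
    (is "?L \<le> (\<Sum>(i,j)\<in>?T. ?g i j)")
proof -
  define n where "n = total_n b s"
  define t where "t = block_p b s p"
  have nb: "b \<le> n" using n_ge_b[OF s1] n_def by simp
  have npos: "real n > 0" "real b > 0" using nb b1 by auto
  have finT: "finite ?T"
    by (rule finite_subset[of _ "Sigma {..<b} (\<lambda>i. {..<s i})"]) auto
  have gnn: "0 \<le> ?g i j" for i j by (intro sum_nonneg) auto
  show ?thesis
  proof (cases "B_set b s \<alpha> p = {}")
    case True
    then have "num_false_rej b s \<alpha> tn p = 0"
      unfolding num_false_rej_def two_stage_rejections_def by simp
    then have "?L = 0" by simp
    also have "0 \<le> (\<Sum>(i,j)\<in>?T. ?g i j)" using gnn by (intro sum_nonneg) (auto split: prod.split)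
    finally show ?thesis .
  next
    case False
    define B where "B = Max (B_set b s \<alpha> p)"
    define tB where "tB = block_order_stat b s p B"
    have BS: "B_set b s \<alpha> p = Bset' b \<alpha> t" using B_set_eq t_def by simp
    have Bin: "B \<in> B_set b s \<alpha> p" unfolding B_def using False BS Bset'_fin by auto
    then have B1: "1 \<le> B" "B \<le> b" unfolding B_set_def by auto
    have tBle: "tB \<le> real B * \<alpha> / real b" using Bin unfolding tB_def B_set_def by auto
    define Rj where "Rj = two_stage_rejections b s \<alpha> p"
    have Rj: "Rj = {(i, j). i < b \<and> j < s i \<and> t i \<le> tB \<and> p i j \<le> real B * \<alpha> / real n}"
      unfolding Rj_def two_stage_rejections_def using False
      by (simp add: Let_def B_def tB_def t_def n_def)
    have finR: "finite Rj"
      by (rule finite_subset[of _ "Sigma {..<b} (\<lambda>i. {..<s i})"]) (auto simp: Rj)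
    define Sel where "Sel = {l\<in>{..<b}. t l \<le> tB}"
    have "B \<le> card Sel"
      using os_char[of B b t tB] B1 unfolding Sel_def
      by (simp add: tB_def block_order_stat_def sorted_block_p_def t_def)
    define jm where "jm = (\<lambda>l. SOME j. j < s l \<and> p l j = Min {p l j | j. j < s l})"
    have jm: "jm l < s l \<and> p l (jm l) = Min {p l j | j. j < s l}" if "l < b" for l
    proof -
      have e: "{p l j | j. j < s l} = (\<lambda>j. p l j) ` {..<s l}" by auto
      have "Min {p l j | j. j < s l} \<in> {p l j | j. j < s l}"
        unfolding e using s1 that by (intro Min_in) (simp_all add: lessThan_empty_iff, fastforce)
      then have "\<exists>j. j < s l \<and> p l j = Min {p l j | j. j < s l}" by auto
      then show ?thesis unfolding jm_def by (rule someI_ex)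
    qed
    have "(\<lambda>l. (l, jm l)) ` Sel \<subseteq> Rj"
    proof safe
      fix l assume l: "l \<in> Sel"
      then have lb: "l < b" and tl: "t l \<le> tB" unfolding Sel_def by auto
      have "t l = real n / real b * p l (jm l)"
        using jm[OF lb] unfolding t_def block_p_def n_def by simp
      then have "real n / real b * p l (jm l) \<le> real B * \<alpha> / real b" using tl tBle by linarith
      then have "real n * p l (jm l) \<le> real B * \<alpha>" using npos by (simp add: field_simps)
      then have "p l (jm l) \<le> real B * \<alpha> / real n" using npos by (simp add: field_simps)
      then show "(l, jm l) \<in> Rj" unfolding Rj using jm[OF lb] lb tl by auto
    qed
    moreover have inj: "inj_on (\<lambda>l. (l, jm l)) Sel" by (auto intro: inj_onI)
    ultimately have "card ((\<lambda>l. (l, jm l)) ` Sel) \<le> card Rj"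
      using finR by (intro card_mono)
    then have "card Sel \<le> card Rj" using card_image[OF inj] by simp
    then have RB: "B \<le> card Rj" using \<open>B \<le> card Sel\<close> by simp
    define S where "S = {(i,j). (i,j) \<in> ?T \<and> Max (Bset' b \<alpha> (t(i:=0))) = B \<and> p i j \<le> real B * \<alpha> / real n}"
    have VS: "{(i, j) \<in> Rj. tn i j} \<subseteq> S"
    proof safe
      fix i j assume h: "(i,j) \<in> Rj" "tn i j"
      then have hi: "i < b" "j < s i" "t i \<le> tB" "p i j \<le> real B * \<alpha> / real n" unfolding Rj by auto
      have "Max (Bset' b \<alpha> (t(i:=0))) = Max (Bset' b \<alpha> t)"
        apply (rule BH_replace)
        using False BS hi tBle a B_def by auto
      then show "(i,j) \<in> S" unfolding S_def using hi h BS B_def by auto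
    qed
    have finS: "finite S" by (rule finite_subset[OF _ finT]) (auto simp: S_def)
    have "card {(i, j) \<in> Rj. tn i j} \<le> card S" using VS finS by (rule card_mono[rotated])
    then have V: "num_false_rej b s \<alpha> tn p \<le> card S" unfolding num_false_rej_def Rj_def by simp
    have "?L \<le> real (num_false_rej b s \<alpha> tn p) / real B"
      using RB B1 unfolding num_rej_def Rj_def[symmetric]
      by (intro divide_left_mono) auto
    also have "\<dots> \<le> real (card S) / real B"
      using V B1 by (intro divide_right_mono) auto
    also have "\<dots> = (\<Sum>x\<in>?T. if x \<in> S then 1 / real B else 0)"
    proof -
      have "(\<Sum>x\<in>?T. if x \<in> S then 1 / real B else 0) = (\<Sum>x\<in>?T \<inter> S. 1 / real B)"
        using finT by (simp add: sum.If_cases)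
      also have "?T \<inter> S = S" unfolding S_def by auto
      finally show ?thesis by simp
    qed
    also have "\<dots> \<le> (\<Sum>(i,j)\<in>?T. ?g i j)"
    proof (rule sum_mono)
      fix x assume "x \<in> ?T"
      obtain i j where x: "x = (i,j)" by (cases x)
      show "(if x \<in> S then 1 / real B else 0) \<le> (case x of (i,j) \<Rightarrow> ?g i j)"
      proof (cases "x \<in> S")
        case True
        then have c: "Max (Bset' b \<alpha> (t(i:=0))) = B" "p i j \<le> real B * \<alpha> / real n"
          unfolding S_def x by auto
        have "1 / real B = (if Max (Bset' b \<alpha> ((block_p b s p)(i:=0))) = B \<and> p i j \<le> real B * \<alpha> / real (total_n b s)
          then 1 / real B else 0)" using c t_def n_def by simp
        also have "\<dots> \<le> ?g i j"
          by (rule member_le_sum[where f="\<lambda>k. if Max (Bset' b \<alpha> ((block_p b s p)(i:=0))) = k \<and> p i j \<le> real k * \<alpha> / real (total_n b s) then 1 / real k else 0"])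
             (use B1 in auto)
        finally show ?thesis using True x by simp
      next
        case False
        then show ?thesis using gnn x by simp
      qed
    qed
    finally show ?thesis .
  qed
qed



lemma uniform_prob:
  assumes "prob_space M" and f: "f \<in> borel_measurable M"
    and d: "distr M lborel f = uniform_measure lborel {0..1}" and x: "0 \<le> x" "x \<le> 1"
  shows "measure M {\<omega>\<in>space M. f \<omega> \<le> (x::real)} = x"
proof -
  have fm: "f \<in> measurable M lborel" using f by simp
  have "{\<omega>\<in>space M. f \<omega> \<le> x} = f -` {..x} \<inter> space M" by auto
  then have "measure M {\<omega>\<in>space M. f \<omega> \<le> x} = measure (distr M lborel f) {..x}"
    by (simp add: measure_distr[OF fm])
  also have "\<dots> = measure (uniform_measure lborel {0..1}) {..x}" using d by simp
  also have "\<dots> = enn2real (emeasure lborel ({0..1} \<inter> {..x}) / emeasure lborel {0..1::real})"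
    by (simp add: measure_def)
  also have "{0..1} \<inter> {..x} = {0..x}" using x by auto
  also have "enn2real (emeasure lborel {0..x} / emeasure lborel {0..1::real}) = x"
    using divide_ennreal[of x 1] x by simp
  finally show ?thesis .
qed

lemma comp_meas:
  assumes "l \<in> K" "j < s l"
  shows "(\<lambda>y. y l j) \<in> borel_measurable (PiM K (\<lambda>l. PiM {..<s l} (\<lambda>_. (borel::real measure))))"
proof -
  have a: "(\<lambda>y. y l) \<in> measurable (PiM K (\<lambda>l. PiM {..<s l} (\<lambda>_. (borel::real measure)))) (PiM {..<s l} (\<lambda>_. (borel::real measure)))"
    using measurable_component_singleton[OF assms(1), of "\<lambda>l. PiM {..<s l} (\<lambda>_. (borel::real measure))"] by simp
  have b: "(\<lambda>z. z j) \<in> measurable (PiM {..<s l} (\<lambda>_. (borel::real measure))) borel"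
    using measurable_component_singleton[of j "{..<s l}" "\<lambda>_. (borel::real measure)"] assms(2) by simp
  show ?thesis using measurable_compose[OF a b] by simp
qed

lemma tQ:
  fixes y :: "nat \<Rightarrow> nat \<Rightarrow> real"
  assumes "0 < n" "0 < b" "1 \<le> s l"
  shows "(real n / real b * Min {y l j | j. j < s l} \<le> c) \<longleftrightarrow> (\<exists>j\<in>{..<s l}. y l j \<le> c * real b / real n)"
proof -
  have e: "{y l j | j. j < s l} = (\<lambda>j. y l j) ` {..<s l}" by auto
  have ne: "(\<lambda>j. y l j) ` {..<s l} \<noteq> {}" using assms(3) by (auto simp: lessThan_empty_iff)
  have "(real n / real b * Min {y l j | j. j < s l} \<le> c) \<longleftrightarrow> Min {y l j | j. j < s l} \<le> c * real b / real n"
    using assms by (simp add: field_simps)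
  also have "\<dots> \<longleftrightarrow> (\<exists>j\<in>{..<s l}. y l j \<le> c * real b / real n)" unfolding e using ne by (subst Min_le_iff) auto
  finally show ?thesis .
qed

lemma card_ge_iff:
  assumes "finite A"
  shows "m \<le> card {l\<in>A. P l} \<longleftrightarrow> (\<exists>L\<in>Pow A. m \<le> card L \<and> (\<forall>l\<in>L. P l))"
proof
  assume "m \<le> card {l\<in>A. P l}" then show "\<exists>L\<in>Pow A. m \<le> card L \<and> (\<forall>l\<in>L. P l)"
    by (intro bexI[of _ "{l\<in>A. P l}"]) auto
next
  assume "\<exists>L\<in>Pow A. m \<le> card L \<and> (\<forall>l\<in>L. P l)"
  then obtain L where L: "L \<subseteq> A" "m \<le> card L" "\<forall>l\<in>L. P l" by auto
  have "card L \<le> card {l\<in>A. P l}" using L assms by (intro card_mono) auto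
  then show "m \<le> card {l\<in>A. P l}" using L by simp
qed

lemma pred_constant: "Measurable.pred N (\<lambda>y. P)"
  by (rule measurable_const) simp

lemma Gk_sets:
  fixes s :: "nat \<Rightarrow> nat" and \<alpha> :: real
  assumes ib: "i < b" and s1: "\<forall>l<b. 1 \<le> s l" and n0: "0 < n" and a: "0 < \<alpha>"
  shows "{y \<in> space (PiM ({..<b}-{i}) (\<lambda>l. PiM {..<s l} (\<lambda>_. (borel::real measure)))).
          Max (Bset' b \<alpha> (\<lambda>l. if l = i then 0 else real n / real b * Min {y l j | j. j < s l})) = k}
        \<in> sets (PiM ({..<b}-{i}) (\<lambda>l. PiM {..<s l} (\<lambda>_. (borel::real measure))))"
proof -
  define N where "N = PiM ({..<b}-{i}) (\<lambda>l. PiM {..<s l} (\<lambda>_. (borel::real measure)))"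
  define c where "c = (\<lambda>m::nat. real m * \<alpha> / real b)"
  define Q where "Q = (\<lambda>m l (y::nat \<Rightarrow> nat \<Rightarrow> real). if l = i \<or> \<not> l < b then (l = i \<and> 0 \<le> c m)
       else (\<exists>j\<in>{..<s l}. y l j \<le> c m * real b / real n))"
  define tt where "tt = (\<lambda>(y::nat \<Rightarrow> nat \<Rightarrow> real) l. if l = i then 0 else real n / real b * Min {y l j | j. j < s l})"
  have b0: "0 < b" using ib by simp
  have hQ: "Measurable.pred N (\<lambda>y. Q m l y)" for m l
  proof (cases "l = i \<or> \<not> l < b")
    case True then show ?thesis unfolding Q_def by (simp add: pred_constant)
  next
    case False
    then have l: "l \<in> {..<b}-{i}" by auto
    have jp: "Measurable.pred N (\<lambda>y. y l j \<le> d)" if "j \<in> {..<s l}" for j d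
      unfolding N_def using that by (intro pred_le_const[OF comp_meas[OF l]]) auto
    have "Measurable.pred N (\<lambda>y. \<exists>j\<in>{..<s l}. y l j \<le> c m * real b / real n)"
      by (rule pred_intros_finite(4)) (auto intro: jp)
    then show ?thesis unfolding Q_def using False by simp
  qed
  have tQ': "(tt y l \<le> c m) \<longleftrightarrow> Q m l y" if "l < b" for y l m
  proof (cases "l = i")
    case True then show ?thesis unfolding tt_def Q_def by simp
  next
    case False
    then show ?thesis unfolding tt_def Q_def
      using tQ[OF n0 b0, of s l y "c m"] s1 that by auto
  qed
  have In: "m \<in> Bset' b \<alpha> (tt y) \<longleftrightarrow> m \<in> {1..b} \<and> (\<exists>L\<in>Pow {..<b}. m \<le> card L \<and> (\<forall>l\<in>L. Q m l y))" for m y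
  proof -
    have "{l\<in>{..<b}. tt y l \<le> real m * \<alpha> / real b} = {l\<in>{..<b}. Q m l y}" using tQ' unfolding c_def by auto
    then show ?thesis unfolding Bset'_def using card_ge_iff[of "{..<b}" m "\<lambda>l. Q m l y"] by auto
  qed
  have one: "1 \<in> Bset' b \<alpha> (tt y)" for y
  proof -
    have "tt y = (\<lambda>l. real n / real b * Min {y l j | j. j < s l})(i:=0)" unfolding tt_def by auto
    then show ?thesis using Bset'_one[of b \<alpha> i] ib a by simp
  qed
  have MaxE: "Max (Bset' b \<alpha> (tt y)) = k \<longleftrightarrow> k \<in> Bset' b \<alpha> (tt y) \<and> (\<forall>m\<in>{1..b}. m \<in> Bset' b \<alpha> (tt y) \<longrightarrow> m \<le> k)" for y
  proof
    assume h: "Max (Bset' b \<alpha> (tt y)) = k"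
    then have "k \<in> Bset' b \<alpha> (tt y)" using one[of y] Bset'_fin[of b \<alpha> "tt y"] by (metis Max_in empty_iff)
    moreover have "\<forall>m\<in>{1..b}. m \<in> Bset' b \<alpha> (tt y) \<longrightarrow> m \<le> k" using h Bset'_fin[of b \<alpha> "tt y"] by auto
    ultimately show "k \<in> Bset' b \<alpha> (tt y) \<and> (\<forall>m\<in>{1..b}. m \<in> Bset' b \<alpha> (tt y) \<longrightarrow> m \<le> k)" by blast
  next
    assume h: "k \<in> Bset' b \<alpha> (tt y) \<and> (\<forall>m\<in>{1..b}. m \<in> Bset' b \<alpha> (tt y) \<longrightarrow> m \<le> k)"
    show "Max (Bset' b \<alpha> (tt y)) = k"
      using h Bset'_fin[of b \<alpha> "tt y"] by (intro antisym Max.boundedI Max_ge) auto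
  qed
  define \<Phi> where "\<Phi> = (\<lambda>y. (k \<in> {1..b} \<and> (\<exists>L\<in>Pow {..<b}. k \<le> card L \<and> (\<forall>l\<in>L. Q k l y))) \<and>
      (\<forall>m\<in>{1..b}. (m \<in> {1..b} \<and> (\<exists>L\<in>Pow {..<b}. m \<le> card L \<and> (\<forall>l\<in>L. Q m l y))) \<longrightarrow> m \<le> k))"
  have "Measurable.pred N \<Phi>" unfolding \<Phi>_def
    by (intro pred_intros_logic pred_intros_finite hQ pred_constant) (auto intro: finite_subset)
  then have "{y\<in>space N. \<Phi> y} \<in> sets N" by (simp add: pred_def)
  moreover have "{y\<in>space N. \<Phi> y} = {y \<in> space N. Max (Bset' b \<alpha> (tt y)) = k}"
    unfolding MaxE In \<Phi>_def by auto
  ultimately show ?thesis unfolding N_def tt_def by simp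
qed



lemma Bset'_cong: "(\<And>l. l < b \<Longrightarrow> t l = t' l) \<Longrightarrow> Bset' b \<alpha> t = Bset' b \<alpha> t'"
proof -
  assume h: "\<And>l. l < b \<Longrightarrow> t l = t' l"
  have "{l\<in>{..<b}. t l \<le> c} = {l\<in>{..<b}. t' l \<le> c}" for c using h by auto
  then show ?thesis unfolding Bset'_def by simp
qed

theorem mainTheorem1:
  fixes M :: "'a measure" and b :: nat and s :: "nat \<Rightarrow> nat"
    and P :: "nat \<Rightarrow> nat \<Rightarrow> 'a \<Rightarrow> real" and \<alpha> :: real
    and true_null :: "nat \<Rightarrow> nat \<Rightarrow> bool"
  assumes "prob_space M"
    and "b \<ge> 1"
    and "\<And>i. i < b \<Longrightarrow> s i \<ge> 1"
    and "\<And>i j. i < b \<Longrightarrow> j < s i \<Longrightarrow> P i j \<in> borel_measurable M"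
    and "\<And>i j. i < b \<Longrightarrow> j < s i \<Longrightarrow> true_null i j \<Longrightarrow>
           distr M lborel (P i j) = uniform_measure lborel {0..1}"
    and "prob_space.indep_vars M (\<lambda>i. PiM {..<s i} (\<lambda>_. borel))
           (\<lambda>i \<omega>. \<lambda>j\<in>{..<s i}. P i j \<omega>) {..<b}"
    and "0 < \<alpha>" and "\<alpha> < 1"
  shows "FDR M b s \<alpha> true_null P \<le> \<alpha>"
proof -
  interpret prob_space M by fact
  have s1: "\<forall>l<b. 1 \<le> s l" using assms(3) by auto
  have a0: "0 < \<alpha>" and a1: "\<alpha> < 1" using assms(7,8) .
  define n where "n = total_n b s"
  have nb: "b \<le> n" using n_ge_b[OF s1] n_def by simp
  have n0: "0 < n" using nb assms(2) by simp
  define T where "T = {(i,j). i<b \<and> j<s i \<and> true_null i j}"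
  have TS: "T \<subseteq> Sigma {..<b} (\<lambda>i. {..<s i})" unfolding T_def by auto
  have finT: "finite T" by (rule finite_subset[OF TS]) auto
  have cardT: "card T \<le> n"
  proof -
    have "card T \<le> card (Sigma {..<b} (\<lambda>i. {..<s i}))" by (rule card_mono[OF _ TS]) auto
    also have "\<dots> = (\<Sum>i<b. s i)" by (subst card_SigmaI) auto
    finally show ?thesis unfolding n_def total_n_def .
  qed
  define Bi where "Bi = (\<lambda>i \<omega>. Max (Bset' b \<alpha> ((block_p b s (\<lambda>l j. P l j \<omega>))(i:=0))))"
  define E where "E = (\<lambda>i j k. {\<omega>\<in>space M. Bi i \<omega> = k \<and> P i j \<omega> \<le> real k * \<alpha> / real n})"
  define D where "D = (\<lambda>i k. {\<omega>\<in>space M. Bi i \<omega> = k})"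
  define M' where "M' = (\<lambda>l. PiM {..<s l} (\<lambda>_. (borel::real measure)))"
  define X where "X = (\<lambda>l \<omega>. \<lambda>j\<in>{..<s l}. P l j \<omega>)"
  have ind: "indep_vars M' X {..<b}" using assms(6) unfolding M'_def X_def .
  have key: "D i k \<in> events \<and> (\<forall>j. j < s i \<longrightarrow> true_null i j \<longrightarrow> k \<in> {1..b} \<longrightarrow>
      E i j k \<in> events \<and> prob (E i j k) = prob (D i k) * (real k * \<alpha> / real n))" if ib: "i < b" for i k
  proof -
    define K where "K = {..<b} - {i}"
    have iv: "indep_var (PiM K M') (\<lambda>\<omega>. restrict (\<lambda>l. X l \<omega>) K) (PiM {i} M') (\<lambda>\<omega>. restrict (\<lambda>l. X l \<omega>) {i})"
      by (rule indep_var_restrict[OF ind]) (auto simp: K_def ib)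
    define Y where "Y = (\<lambda>\<omega>. restrict (\<lambda>l. X l \<omega>) K)"
    define Z where "Z = (\<lambda>\<omega>. restrict (\<lambda>l. X l \<omega>) {i})"
    have iv': "indep_var (PiM K M') Y (PiM {i} M') Z" using iv unfolding Y_def Z_def .
    have Ym: "Y \<in> measurable M (PiM K M')" using indep_var_rv1[OF iv'] .
    have Zm: "Z \<in> measurable M (PiM {i} M')" using indep_var_rv2[OF iv'] .
    define A where "A = {y\<in>space (PiM K M'). Max (Bset' b \<alpha> (\<lambda>l. if l = i then 0 else real n / real b * Min {y l j | j. j < s l})) = k}"
    have Asets: "A \<in> sets (PiM K M')" unfolding A_def K_def M'_def by (rule Gk_sets[OF ib s1 n0 a0])
    have cong: "Bi i \<omega> = Max (Bset' b \<alpha> (\<lambda>l. if l = i then 0 else real n / real b * Min {Y \<omega> l j | j. j < s l}))" for \<omega>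
    proof -
      have "Bset' b \<alpha> ((block_p b s (\<lambda>l j. P l j \<omega>))(i:=0)) = Bset' b \<alpha> (\<lambda>l. if l = i then 0 else real n / real b * Min {Y \<omega> l j | j. j < s l})"
      proof (rule Bset'_cong)
        fix l assume l: "l < b"
        show "((block_p b s (\<lambda>l j. P l j \<omega>))(i:=0)) l = (if l = i then 0 else real n / real b * Min {Y \<omega> l j | j. j < s l})"
        proof (cases "l = i")
          case True then show ?thesis by simp
        next
          case False
          then have "{Y \<omega> l j | j. j < s l} = {P l j \<omega> | j. j < s l}" using l by (auto simp: Y_def X_def K_def)
          then show ?thesis using False unfolding block_p_def n_def by simp
        qed
      qed
      then show ?thesis unfolding Bi_def by simp
    qed
    have YA: "Y \<omega> \<in> A \<longleftrightarrow> Bi i \<omega> = k" if "\<omega> \<in> space M" for \<omega>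
      unfolding A_def using measurable_space[OF Ym that] cong[of \<omega>] by auto
    have DA: "D i k = Y -` A \<inter> space M" unfolding D_def using YA by auto
    have Dev: "D i k \<in> events" using measurable_sets[OF Ym Asets] DA by simp
    have rest: "E i j k \<in> events \<and> prob (E i j k) = prob (D i k) * (real k * \<alpha> / real n)"
      if j: "j < s i" and tn: "true_null i j" and k: "k \<in> {1..b}" for j
    proof -
      define x where "x = real k * \<alpha> / real n"
      have x0: "0 \<le> x" unfolding x_def using a0 by simp
      have "real k * \<alpha> \<le> real n * 1" using k nb a0 a1 by (intro mult_mono) auto
      then have x1: "x \<le> 1" unfolding x_def using n0 by (simp add: divide_le_eq)
      define Bx where "Bx = {z\<in>space (PiM {i} M'). z i j \<le> x}"
      have "Measurable.pred (PiM {i} M') (\<lambda>z. z i j \<le> x)"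
        unfolding M'_def using j by (intro pred_le_const[OF comp_meas]) auto
      then have Bxs: "Bx \<in> sets (PiM {i} M')" unfolding Bx_def by (simp add: pred_def)
      have ZB: "Z \<omega> \<in> Bx \<longleftrightarrow> P i j \<omega> \<le> x" if "\<omega> \<in> space M" for \<omega>
        unfolding Bx_def using measurable_space[OF Zm that] j by (auto simp: Z_def X_def)
      have PZ: "{\<omega>\<in>space M. P i j \<omega> \<le> x} = Z -` Bx \<inter> space M" using ZB by auto
      have EE: "E i j k = (\<lambda>\<omega>. (Y \<omega>, Z \<omega>)) -` (A \<times> Bx) \<inter> space M"
        unfolding E_def x_def[symmetric] using YA ZB by auto
      have Eev: "E i j k \<in> events" unfolding EE
        using measurable_sets[OF measurable_Pair[OF Ym Zm] pair_measureI[OF Asets Bxs]] .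
      have "prob (E i j k) = prob (Y -` A \<inter> space M) * prob (Z -` Bx \<inter> space M)"
        unfolding EE by (rule indep_varD[OF iv' Asets Bxs])
      also have "prob (Z -` Bx \<inter> space M) = x"
        using uniform_prob[OF assms(1) assms(4)[OF ib j] assms(5)[OF ib j tn] x0 x1] PZ by simp
      finally show ?thesis using Eev DA x_def by simp
    qed
    show ?thesis using Dev rest by blast
  qed
  have Bsum: "(\<Sum>k\<in>{1..b}. prob (D i k)) \<le> 1" if ib: "i < b" for i
  proof -
    have "(\<Sum>k\<in>{1..b}. prob (D i k)) = prob (\<Union>k\<in>{1..b}. D i k)"
      using key[OF ib] by (intro finite_measure_finite_Union[symmetric]) (auto simp: disjoint_family_on_def D_def)
    also have "\<dots> \<le> 1" by simp
    finally show ?thesis .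
  qed
  define F where "F = (\<lambda>\<omega>. \<Sum>(i,j)\<in>T. \<Sum>k\<in>{1..b}. (1 / real k) * indicator (E i j k) \<omega>)"
  define G where "G = (\<lambda>\<omega>. real (num_false_rej b s \<alpha> true_null (\<lambda>i j. P i j \<omega>)) /
          real (max (num_rej b s \<alpha> (\<lambda>i j. P i j \<omega>)) 1))"
  have GF: "G \<omega> \<le> F \<omega>" if "\<omega> \<in> space M" for \<omega>
  proof -
    have "F \<omega> = (\<Sum>(i,j)\<in>{(i,j). i<b \<and> j<s i \<and> true_null i j}. \<Sum>k\<in>{1..b}.
       if Max (Bset' b \<alpha> ((block_p b s (\<lambda>l j. P l j \<omega>))(i:=0))) = k \<and> P i j \<omega> \<le> real k * \<alpha> / real (total_n b s)
       then 1 / real k else 0)"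
      unfolding F_def T_def using that
      by (intro sum.cong refl) (auto simp: E_def Bi_def n_def indicator_def split: prod.split intro!: sum.cong)
    then show ?thesis unfolding G_def using pointwise[OF assms(2) s1 a0, where p="\<lambda>i j. P i j \<omega>" and tn=true_null] by simp
  qed
  have Eev: "E i j k \<in> events" if "(i,j) \<in> T" "k \<in> {1..b}" for i j k
    using key[of i k] that unfolding T_def by auto
  have intk: "integrable M (\<lambda>\<omega>. (1/real k) * indicator (E i j k) \<omega>)" if "(i,j) \<in> T" "k \<in> {1..b}" for i j k
    using Eev[OF that] by (intro integrable_mult_right integrable_real_indicator) (auto simp: less_top[symmetric] emeasure_finite)
  have intT: "integrable M (\<lambda>\<omega>. case x of (i,j) \<Rightarrow> \<Sum>k\<in>{1..b}. (1/real k) * indicator (E i j k) \<omega>)" if xT: "x \<in> T" for x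
  proof -
    obtain i j where x: "x = (i,j)" by (cases x)
    have "integrable M (\<lambda>\<omega>. \<Sum>k\<in>{1..b}. (1/real k) * indicator (E i j k) \<omega>)"
      using intk[of i j] xT x by (intro Bochner_Integration.integrable_sum) auto
    then show ?thesis unfolding x by simp
  qed
  have intF: "integrable M F" unfolding F_def
    by (rule Bochner_Integration.integrable_sum) (rule intT)
  have "integral\<^sup>L M F = (\<Sum>x\<in>T. integral\<^sup>L M (\<lambda>\<omega>. case x of (i,j) \<Rightarrow> \<Sum>k\<in>{1..b}. (1/real k) * indicator (E i j k) \<omega>))"
    unfolding F_def by (rule Bochner_Integration.integral_sum) (rule intT)
  also have "\<dots> = (\<Sum>(i,j)\<in>T. \<Sum>k\<in>{1..b}. (1 / real k) * prob (E i j k))"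
  proof (rule sum.cong[OF refl])
    fix x assume xT: "x \<in> T"
    obtain i j where x: "x = (i,j)" by (cases x)
    have "integral\<^sup>L M (\<lambda>\<omega>. \<Sum>k\<in>{1..b}. (1/real k) * indicator (E i j k) \<omega>) =
        (\<Sum>k\<in>{1..b}. integral\<^sup>L M (\<lambda>\<omega>. (1/real k) * indicator (E i j k) \<omega>))"
      using intk[of i j] xT x by (intro Bochner_Integration.integral_sum) auto
    also have "\<dots> = (\<Sum>k\<in>{1..b}. (1 / real k) * prob (E i j k))"
    proof (rule sum.cong[OF refl])
      fix k assume k: "k \<in> {1..b}"
      have "E i j k \<inter> space M = E i j k" unfolding E_def by auto
      then show "integral\<^sup>L M (\<lambda>\<omega>. (1/real k) * indicator (E i j k) \<omega>) = (1 / real k) * prob (E i j k)"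
        by simp
    qed
    finally show "integral\<^sup>L M (\<lambda>\<omega>. case x of (i,j) \<Rightarrow> \<Sum>k\<in>{1..b}. (1/real k) * indicator (E i j k) \<omega>) =
       (case x of (i,j) \<Rightarrow> \<Sum>k\<in>{1..b}. (1 / real k) * prob (E i j k))" unfolding x by simp
  qed
  also have "\<dots> = (\<Sum>(i,j)\<in>T. (\<alpha> / real n) * (\<Sum>k\<in>{1..b}. prob (D i k)))"
  proof (rule sum.cong[OF refl])
    fix x assume xT: "x \<in> T"
    obtain i j where x: "x = (i,j)" by (cases x)
    have h: "i < b" "j < s i" "true_null i j" using xT x unfolding T_def by auto
    have "(\<Sum>k\<in>{1..b}. (1/real k) * prob (E i j k)) = (\<Sum>k\<in>{1..b}. (\<alpha> / real n) * prob (D i k))"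
    proof (rule sum.cong[OF refl])
      fix k assume k: "k \<in> {1..b}"
      have "prob (E i j k) = prob (D i k) * (real k * \<alpha> / real n)" using key[of i k] h k by auto
      then show "(1/real k) * prob (E i j k) = (\<alpha> / real n) * prob (D i k)" using k by (simp add: field_simps)
    qed
    then show "(case x of (i,j) \<Rightarrow> \<Sum>k\<in>{1..b}. (1/real k) * prob (E i j k)) =
       (case x of (i,j) \<Rightarrow> (\<alpha> / real n) * (\<Sum>k\<in>{1..b}. prob (D i k)))"
      unfolding x by (simp add: sum_distrib_left)
  qed
  also have "\<dots> \<le> (\<Sum>(i,j)\<in>T. \<alpha> / real n)"
  proof (rule sum_mono)
    fix x assume xT: "x \<in> T"
    obtain i j where x: "x = (i,j)" by (cases x)
    have h: "i < b" using xT x unfolding T_def by auto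
    have "(\<alpha> / real n) * (\<Sum>k\<in>{1..b}. prob (D i k)) \<le> \<alpha> / real n"
      using Bsum[OF h] a0 n0 by (intro mult_left_le) auto
    then show "(case x of (i,j) \<Rightarrow> (\<alpha> / real n) * (\<Sum>k\<in>{1..b}. prob (D i k))) \<le> (case x of (i,j) \<Rightarrow> \<alpha> / real n)"
      unfolding x by simp
  qed
  also have "\<dots> = real (card T) * (\<alpha> / real n)" by simp
  also have "\<dots> \<le> real n * (\<alpha> / real n)"
    using cardT a0 n0 by (intro mult_right_mono) auto
  also have "\<dots> = \<alpha>" using n0 by simp
  finally have IF: "integral\<^sup>L M F \<le> \<alpha>" .
  show ?thesis
  proof (cases "integrable M G")
    case True
    have "integral\<^sup>L M G \<le> integral\<^sup>L M F" using True intF GF by (rule integral_mono)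
    then show ?thesis using IF unfolding FDR_def G_def by simp
  next
    case False
    then show ?thesis unfolding FDR_def G_def using not_integrable_integral_eq a0 by fastforce
  qed
qed

end
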